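(* For every real $t\geq 1$: $C(t)>0$ if and only if $t<\vartheta^-(G)$.
   Context: Let $G$ be a simple graph with vertex set $V=\{1,\dots,n\}$, edge set $E$ and adjacency matrix $A$. Let $e$ denote the all-ones vector, $\langle M,N\rangle=\operatorname{trace}(M^TN)$, and $Y\geq 0$ mean entrywise nonnegativity. For real $t\geq 1$, $P(t)$ is the semidefinite program $$\min \tfrac12\langle A,Y\rangle \ \text{ s.t. } \begin{pmatrix} Y & e\\ e^T & t\end{pmatrix}\succeq 0,\ \operatorname{diag}(Y)=e,\ Y\geq 0,$$ over symmetric $n\times n$ matrices $Y$, and $C(t)$ denotes its optimal value. Szegedy's number is $$\vartheta^-(G)=\min\ t \ \text{ s.t. } \begin{pmatrix} Y & e\\ e^T & t\end{pmatrix}\succeq 0,\ \operatorname{diag}(Y)=e,\ Y_{i,j}=0\ \forall [i,j]\in E,\ Y\geq 0.$$ *)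

theory Defs
  imports Complex_Main
begin

text \<open>Vertices are the elements of a finite type 'v (playing the role of {1..n});
  a simple graph is given by a symmetric, irreflexive edge relation E.\<close>

definition simple_graph :: "('v \<Rightarrow> 'v \<Rightarrow> bool) \<Rightarrow> bool" where
  "simple_graph E \<longleftrightarrow> (\<forall>i j. E i j \<longleftrightarrow> E j i) \<and> (\<forall>i. \<not> E i i)"

definition adj :: "('v \<Rightarrow> 'v \<Rightarrow> bool) \<Rightarrow> 'v \<Rightarrow> 'v \<Rightarrow> real" where
  "adj E i j = (if E i j then 1 else 0)"

definition psd :: "('a::finite \<Rightarrow> 'a \<Rightarrow> real) \<Rightarrow> bool" where
  "psd M \<longleftrightarrow> (\<forall>i j. M i j = M j i) \<and> (\<forall>x. 0 \<le> (\<Sum>i\<in>UNIV. \<Sum>j\<in>UNIV. x i * M i j * x j))"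

text \<open>The bordered matrix [[Y, e], [e^T, t]]; the extra index is None.\<close>
definition bordered :: "('v \<Rightarrow> 'v \<Rightarrow> real) \<Rightarrow> real \<Rightarrow> 'v option \<Rightarrow> 'v option \<Rightarrow> real" where
  "bordered Y t a b = (case (a, b) of
      (Some i, Some j) \<Rightarrow> Y i j
    | (Some i, None) \<Rightarrow> 1
    | (None, Some j) \<Rightarrow> 1
    | (None, None) \<Rightarrow> t)"

definition frob :: "('v::finite \<Rightarrow> 'v \<Rightarrow> real) \<Rightarrow> ('v \<Rightarrow> 'v \<Rightarrow> real) \<Rightarrow> real" where
  "frob M N = (\<Sum>i\<in>UNIV. \<Sum>j\<in>UNIV. M i j * N i j)"

definition feasP :: "real \<Rightarrow> ('v::finite \<Rightarrow> 'v \<Rightarrow> real) set" where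
  "feasP t = {Y. (\<forall>i j. Y i j = Y j i) \<and> psd (bordered Y t) \<and> (\<forall>i. Y i i = 1) \<and> (\<forall>i j. 0 \<le> Y i j)}"

definition Cval :: "('v::finite \<Rightarrow> 'v \<Rightarrow> bool) \<Rightarrow> real \<Rightarrow> real" where
  "Cval E t = Inf ((\<lambda>Y. frob (adj E) Y / 2) ` feasP t)"

definition theta_minus :: "('v::finite \<Rightarrow> 'v \<Rightarrow> bool) \<Rightarrow> real" where
  "theta_minus E = Inf {t. \<exists>Y. (\<forall>i j. Y i j = Y j i) \<and> psd (bordered Y t) \<and> (\<forall>i. Y i i = 1)
                              \<and> (\<forall>i j. E i j \<longrightarrow> Y i j = 0) \<and> (\<forall>i j. 0 \<le> Y i j)}"

end

theory Submission imports Defs "HOL-Analysis.Analysis" begin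

definition Qf :: "('v::finite \<Rightarrow> 'v \<Rightarrow> real) \<Rightarrow> ('v \<Rightarrow> real) \<Rightarrow> real" where
  "Qf Y y = (\<Sum>i\<in>UNIV. \<Sum>j\<in>UNIV. y i * Y i j * y j)"

lemma sum_option: "(\<Sum>a\<in>(UNIV::'v::finite option set). f a) = f None + (\<Sum>i\<in>UNIV. f (Some i))"
  by (simp add: UNIV_option_conv sum.reindex)

lemma quad_bordered:
  fixes Y :: "'v::finite \<Rightarrow> 'v \<Rightarrow> real"
  shows "(\<Sum>a\<in>UNIV. \<Sum>b\<in>UNIV. x a * bordered Y t a b * x b)
     = Qf Y (\<lambda>i. x (Some i)) + 2 * x None * (\<Sum>i\<in>UNIV. x (Some i)) + t * (x None)^2"
proof -
  have "(\<Sum>a\<in>UNIV. \<Sum>b\<in>UNIV. x a * bordered Y t a b * x b)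
     = (x None * t * x None + (\<Sum>j\<in>UNIV. x None * x (Some j))) +
       (\<Sum>i\<in>UNIV. x (Some i) * x None + (\<Sum>j\<in>UNIV. x (Some i) * Y i j * x (Some j)))"
    by (simp add: sum_option bordered_def)
  also have "\<dots> = Qf Y (\<lambda>i. x (Some i)) + 2 * x None * (\<Sum>i\<in>UNIV. x (Some i)) + t * (x None)^2"
    unfolding Qf_def sum.distrib by (simp add: sum_distrib_left power2_eq_square mult.commute mult.left_commute)
  finally show ?thesis .
qed

lemma psd_bordered_iff:
  fixes Y :: "'v::finite \<Rightarrow> 'v \<Rightarrow> real"
  assumes "\<forall>i j. Y i j = Y j i"
  shows "psd (bordered Y t) \<longleftrightarrow> (\<forall>x. 0 \<le> Qf Y (\<lambda>i. x (Some i)) + 2 * x None * (\<Sum>i\<in>UNIV. x (Some i)) + t * (x None)^2)"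
proof -
  have "\<forall>a b. bordered Y t a b = bordered Y t b a" using assms
    by (auto simp: bordered_def split: option.splits)
  then show ?thesis unfolding psd_def quad_bordered by simp
qed

lemma psd_bordered_sym:
  assumes "psd (bordered (Y::'v::finite \<Rightarrow> 'v \<Rightarrow> real) s)"
  shows "\<forall>i j. Y i j = Y j i"
proof (intro allI)
  fix i j
  have "bordered Y s (Some i) (Some j) = bordered Y s (Some j) (Some i)"
    using assms unfolding psd_def by blast
  then show "Y i j = Y j i" by (simp add: bordered_def)
qed

lemma psd_bordered_mono:
  assumes "psd (bordered (Y::'v::finite \<Rightarrow> 'v \<Rightarrow> real) s)" "s \<le> s'"
  shows "psd (bordered Y s')"
proof -
  have sym: "\<forall>i j. Y i j = Y j i" using assms(1) by (rule psd_bordered_sym)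
  show ?thesis using assms(1) unfolding psd_bordered_iff[OF sym]
  proof (intro allI)
    fix x :: "'v option \<Rightarrow> real"
    assume h: "\<forall>x. 0 \<le> Qf Y (\<lambda>i. x (Some i)) + 2 * x None * (\<Sum>i\<in>UNIV. x (Some i)) + s * (x None)\<^sup>2"
    have "s*(x None)^2 \<le> s'*(x None)^2" by (rule mult_right_mono) (use assms(2) in auto)
    then show "0 \<le> Qf Y (\<lambda>i. x (Some i)) + 2 * x None * (\<Sum>i\<in>UNIV. x (Some i)) + s' * (x None)\<^sup>2"
      using h[rule_format, of x] by linarith
  qed
qed

lemma psd_t_nonneg:
  assumes "psd (bordered (Y::'v::finite \<Rightarrow> 'v \<Rightarrow> real) s)"
  shows "0 \<le> s"
proof -
  define x :: "'v option \<Rightarrow> real" where "x = (\<lambda>a. if a = None then 1 else 0)"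
  have "0 \<le> (\<Sum>a\<in>UNIV. \<Sum>b\<in>UNIV. x a * bordered Y s a b * x b)"
    using assms unfolding psd_def by blast
  then show ?thesis unfolding quad_bordered by (simp add: Qf_def x_def)
qed

lemma qdelta:
  fixes Y :: "'v::finite \<Rightarrow> 'v \<Rightarrow> real" and p q :: 'v
  shows "(\<Sum>i\<in>UNIV. \<Sum>j\<in>UNIV. (if i = p then 1 else 0) * Y i j * (if j = q then 1 else (0::real))) = Y p q"
proof -
  have "\<And>i. (\<Sum>j\<in>UNIV. (if i = p then 1 else 0) * Y i j * (if j = q then 1 else (0::real))) = (if i = p then Y i q else 0)"
    by (simp add: if_distrib[of "\<lambda>z. _ * z"] sum.delta' cong: if_cong)
  then have "(\<Sum>i\<in>UNIV. \<Sum>j\<in>UNIV. (if i = p then 1 else 0) * Y i j * (if j = q then 1 else (0::real))) = (\<Sum>i\<in>UNIV. if i = p then Y i q else 0)"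
    by (intro sum.cong) auto
  also have "\<dots> = Y p q" using sum.delta[OF finite, of p "\<lambda>i. Y i q"] by simp
  finally show ?thesis .
qed

lemma psd_bound:
  assumes "psd (bordered (Y::'v::finite \<Rightarrow> 'v \<Rightarrow> real) s)" "\<forall>i. Y i i = 1"
  shows "Y a b \<le> 1"
proof (cases "a = b")
  case True then show ?thesis using assms by simp
next
  case False
  have sym: "\<forall>i j. Y i j = Y j i" using assms(1) by (rule psd_bordered_sym)
  define x where "x = (\<lambda>c. case c of None \<Rightarrow> 0 | Some k \<Rightarrow> (if k = a then 1 else if k = b then -1 else 0::real))"
  have "0 \<le> (\<Sum>c\<in>UNIV. \<Sum>d\<in>UNIV. x c * bordered Y s c d * x d)"
    using assms unfolding psd_def by blast
  also have "\<dots> = Qf Y (\<lambda>i. x (Some i))" unfolding quad_bordered by (simp add: x_def)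
  also have "\<dots> = Qf Y (\<lambda>k. (if k = a then 1 else 0) - (if k = b then 1 else 0))"
    using False by (intro arg_cong[where f="Qf Y"]) (auto simp: x_def)
  also have "\<dots> = Y a a - Y a b - Y b a + Y b b"
  proof -
    let ?d = "\<lambda>c k. if k = c then 1 else (0::real)"
    have e: "\<And>i j. (?d a i - ?d b i) * Y i j * (?d a j - ?d b j)
        = ?d a i * Y i j * ?d a j - ?d a i * Y i j * ?d b j - ?d b i * Y i j * ?d a j + ?d b i * Y i j * ?d b j"
      by (simp add: algebra_simps)
    show ?thesis unfolding Qf_def e by (simp only: sum.distrib sum_subtractf qdelta)
  qed
  also have "\<dots> = 2 - 2 * Y a b"
    using sym assms(2) by simp
  finally show ?thesis by simp
qed

definition toF :: "real^'v^'v \<Rightarrow> 'v::finite \<Rightarrow> 'v \<Rightarrow> real" where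
  "toF M = (\<lambda>i j. M$i$j)"

definition fromF :: "('v::finite \<Rightarrow> 'v \<Rightarrow> real) \<Rightarrow> real^'v^'v" where
  "fromF Y = (\<chi> i j. Y i j)"

lemma toF_fromF[simp]: "toF (fromF Y) = Y"
  by (simp add: toF_def fromF_def)

lemma cont_toF[continuous_intros]: "continuous_on UNIV (\<lambda>M. toF M i j)"
  unfolding toF_def by (intro continuous_intros)

lemma cont_bord[continuous_intros]: "continuous_on UNIV (\<lambda>M. bordered (toF M) s a b)"
  by (cases a; cases b) (simp_all add: bordered_def continuous_intros)

lemma closed_psd: "closed {M::real^'v::finite^'v. psd (bordered (toF M) s)}"
  unfolding psd_def
  by (intro closed_Collect_conj closed_Collect_all closed_Collect_eq closed_Collect_le continuous_intros)

lemma closed_imp_zero: "closed {M::real^'v::finite^'v. E i j \<longrightarrow> toF M i j = 0}"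
  by (cases "E i j") (simp_all add: closed_Collect_eq continuous_intros)

definition Kset :: "(real^'v::finite^'v) set" where
  "Kset = {M. \<forall>i j. \<bar>toF M i j\<bar> \<le> 1}"

lemma compact_K: "compact (Kset :: (real^'v::finite^'v) set)"
proof -
  have c: "closed (Kset :: (real^'v^'v) set)" unfolding Kset_def
    by (intro closed_Collect_all closed_Collect_le continuous_intros)
  have "\<forall>M\<in>(Kset :: (real^'v^'v) set). norm M \<le> real CARD('v) * real CARD('v)"
  proof
    fix M :: "real^'v^'v" assume M: "M \<in> Kset"
    have "norm M \<le> (\<Sum>i\<in>UNIV. \<bar>norm (M$i)\<bar>)"
      unfolding norm_vec_def by (rule L2_set_le_sum_abs)
    also have "\<dots> \<le> (\<Sum>i\<in>(UNIV::'v set). real CARD('v))"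
    proof -
      have bnd: "\<bar>norm (M$i)\<bar> \<le> real CARD('v)" for i
      proof -
        have "norm (M$i) \<le> (\<Sum>j\<in>UNIV. \<bar>M$i$j\<bar>)" by (rule norm_le_l1_cart)
        also have "\<dots> \<le> (\<Sum>j\<in>(UNIV::'v set). 1)"
          by (intro sum_mono) (use M in \<open>auto simp: Kset_def toF_def\<close>)
        finally show ?thesis by simp
      qed
      show ?thesis by (intro sum_mono bnd)
    qed
    finally show "norm M \<le> real CARD('v) * real CARD('v)" by simp
  qed
  then have "bounded (Kset :: (real^'v^'v) set)" unfolding bounded_iff by blast
  with c show ?thesis by (simp add: compact_eq_bounded_closed)
qed

definition thS :: "('v::finite \<Rightarrow> 'v \<Rightarrow> bool) \<Rightarrow> real set" where
  "thS E = {t. \<exists>Y. (\<forall>i j. Y i j = Y j i) \<and> psd (bordered Y t) \<and> (\<forall>i. Y i i = 1)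
                              \<and> (\<forall>i j. E i j \<longrightarrow> Y i j = 0) \<and> (\<forall>i j. 0 \<le> Y i j)}"

lemma theta_eq: "theta_minus E = Inf (thS E)"
  unfolding theta_minus_def thS_def ..

definition Cset :: "('v::finite \<Rightarrow> 'v \<Rightarrow> bool) \<Rightarrow> real \<Rightarrow> (real^'v^'v) set" where
  "Cset E s = {M. (\<forall>i j. toF M i j = toF M j i) \<and> psd (bordered (toF M) s) \<and> (\<forall>i. toF M i i = 1)
      \<and> (\<forall>i j. E i j \<longrightarrow> toF M i j = 0) \<and> (\<forall>i j. 0 \<le> toF M i j)}"

lemma closed_Cset: "closed (Cset E s)"
  unfolding Cset_def
  apply (intro closed_Collect_conj)
      apply (intro closed_Collect_all closed_Collect_eq continuous_intros)
     apply (rule closed_psd)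
    apply (intro closed_Collect_all closed_Collect_eq continuous_intros)
   apply (intro closed_Collect_all closed_imp_zero)
  apply (intro closed_Collect_all closed_Collect_le continuous_intros)
  done

lemma thS_mono: "s \<in> thS E \<Longrightarrow> s \<le> s' \<Longrightarrow> s' \<in> thS E"
  unfolding thS_def using psd_bordered_mono by blast

lemma thS_bdd: "bdd_below (thS E)"
  unfolding bdd_below_def thS_def using psd_t_nonneg by blast

lemma Qf_id: "Qf (\<lambda>i j. if i = j then 1 else 0) y = (\<Sum>i\<in>UNIV. (y i)^2)"
proof -
  have "\<And>i. (\<Sum>j\<in>UNIV. y i * (if i = j then 1 else 0) * y j) = (\<Sum>j\<in>UNIV. if i = j then y i * y j else 0)"
    by (intro sum.cong) auto
  then show ?thesis unfolding Qf_def by (simp add: sum.delta' power2_eq_square)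
qed

lemma Qf_J: "Qf (\<lambda>i j. 1) y = (\<Sum>i\<in>UNIV. y i)^2"
  unfolding Qf_def by (simp add: power2_eq_square sum_product)

lemma thS_ne:
  assumes g: "simple_graph (E :: 'v::finite \<Rightarrow> 'v \<Rightarrow> bool)"
  shows "real CARD('v) \<in> thS E"
proof -
  let ?I = "(\<lambda>i j. if i = j then 1 else 0) :: 'v \<Rightarrow> 'v \<Rightarrow> real"
  have sym: "\<forall>i j. ?I i j = ?I j i" by auto
  have "psd (bordered ?I (real CARD('v)))"
    unfolding psd_bordered_iff[OF sym]
  proof (intro allI)
    fix x :: "'v option \<Rightarrow> real"
    have "0 \<le> (\<Sum>i\<in>UNIV. (x (Some i) + x None)^2)" by (intro sum_nonneg) simp
    also have "\<dots> = (\<Sum>i\<in>UNIV. (x (Some i))^2) + 2 * x None * (\<Sum>i\<in>UNIV. x (Some i)) + real CARD('v) * (x None)^2"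
      by (simp add: power2_sum sum.distrib sum_distrib_left mult.assoc mult.commute[of "x None"])
    finally show "0 \<le> Qf ?I (\<lambda>i. x (Some i)) + 2 * x None * (\<Sum>i\<in>UNIV. x (Some i)) + real CARD('v) * (x None)\<^sup>2"
      by (simp add: Qf_id)
  qed
  then show ?thesis using g unfolding thS_def simple_graph_def by (intro CollectI exI[of _ ?I]) auto
qed

lemma J_feas: 
  fixes t :: real
  assumes t: "t \<ge> 1"
  shows "((\<lambda>i j. 1) :: 'v::finite \<Rightarrow> 'v \<Rightarrow> real) \<in> feasP t"
proof -
  have sym: "\<forall>i j. ((\<lambda>i j. 1) :: 'v::finite \<Rightarrow> 'v \<Rightarrow> real) i j = (\<lambda>i j. 1) j i" by auto
  have "psd (bordered ((\<lambda>i j. 1) :: 'v::finite \<Rightarrow> 'v \<Rightarrow> real) t)"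
    unfolding psd_bordered_iff[OF sym]
  proof (intro allI)
    fix x :: "'v option \<Rightarrow> real"
    let ?S = "\<Sum>i\<in>UNIV. x (Some i)"
    have "0 \<le> (?S + x None)^2 + (t - 1) * (x None)^2" using t by simp
    also have "\<dots> = ?S^2 + 2 * x None * ?S + t * (x None)^2"
      by (simp add: power2_sum algebra_simps)
    finally show "0 \<le> Qf (\<lambda>i j. 1) (\<lambda>i. x (Some i)) + 2 * x None * ?S + t * (x None)\<^sup>2"
      by (simp add: Qf_J)
  qed
  then show ?thesis unfolding feasP_def by simp
qed

lemma lim_aff:
  fixes A b th :: real
  assumes "\<forall>s>th. 0 \<le> A + s * b" "0 \<le> b"
  shows "0 \<le> A + th * b"
proof (rule ccontr)
  assume n: "\<not> 0 \<le> A + th * b"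
  show False
  proof (cases "b = 0")
    case True then show False using assms(1)[rule_format, of "th + 1"] n by simp
  next
    case False
    then have bp: "b > 0" using assms(2) by simp
    define s where "s = th - (A + th * b) / (2 * b)"
    have "s > th" unfolding s_def using n bp by (simp add: field_simps)
    moreover have "A + s * b = (A + th * b) / 2" unfolding s_def using bp by (simp add: field_simps)
    ultimately show False using assms(1) n by fastforce
  qed
qed

lemma toF_Kset: "psd (bordered Y s) \<Longrightarrow> (\<forall>i. Y i i = 1) \<Longrightarrow> (\<forall>i j. 0 \<le> Y i j) \<Longrightarrow> fromF Y \<in> Kset"
  unfolding Kset_def using psd_bound[of Y s] by (simp add: abs_le_iff) (meson order_trans neg_le_0_iff_le zero_le_one)

lemma thS_inf_mem:
  assumes g: "simple_graph E"
  shows "Inf (thS E) \<in> thS E"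
proof -
  define th where "th = Inf (thS E)"
  have ne: "thS E \<noteq> {}" using thS_ne[OF g] by blast
  have "Kset \<inter> (\<Inter>s\<in>{s. th < s}. Cset E s) \<noteq> {}"
  proof (rule compact_imp_fip_image[OF compact_K])
    show "\<And>s. s \<in> {s. th < s} \<Longrightarrow> closed (Cset E s)" by (rule closed_Cset)
  next
    fix I' assume fin: "finite I'" and sub: "I' \<subseteq> {s. th < s}"
    show "Kset \<inter> (\<Inter>s\<in>I'. Cset E s) \<noteq> {}"
    proof (cases "I' = {}")
      case True
      have "0 \<in> Kset" by (simp add: Kset_def toF_def)
      then show ?thesis using True by auto
    next
      case False
      define m where "m = Min I'"
      have "m \<in> I'" unfolding m_def using fin False by simp
      then have "th < m" using sub by auto
      then obtain s1 where s1: "s1 \<in> thS E" "s1 < m" using cInf_lessD[OF ne] unfolding th_def by blast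
      then obtain Y where Y: "\<forall>i j. Y i j = Y j i" "psd (bordered Y s1)" "\<forall>i. Y i i = 1"
          "\<forall>i j. E i j \<longrightarrow> Y i j = 0" "\<forall>i j. 0 \<le> Y i j"
        unfolding thS_def by blast
      have "fromF Y \<in> Kset" using Y by (intro toF_Kset) auto
      moreover have "fromF Y \<in> Cset E s" if "s \<in> I'" for s
      proof -
        have "m \<le> s" unfolding m_def using fin that by simp
        then have "psd (bordered Y s)" using Y(2) s1(2) psd_bordered_mono by (meson less_imp_le order_trans)
        then show ?thesis using Y unfolding Cset_def by simp
      qed
      ultimately show ?thesis by blast
    qed
  qed
  then obtain M where M: "\<forall>s>th. M \<in> Cset E s" by blast
  define Y where "Y = toF M"
  have Y1: "M \<in> Cset E (th + 1)" using M by simp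
  then have sym: "\<forall>i j. Y i j = Y j i" and d: "\<forall>i. Y i i = 1" and z: "\<forall>i j. E i j \<longrightarrow> Y i j = 0"
    and nn: "\<forall>i j. 0 \<le> Y i j" unfolding Cset_def Y_def by auto
  have ps: "\<forall>s>th. psd (bordered Y s)" using M unfolding Cset_def Y_def by auto
  have "psd (bordered Y th)" unfolding psd_bordered_iff[OF sym]
  proof (intro allI)
    fix x :: "'a option \<Rightarrow> real"
    show "0 \<le> Qf Y (\<lambda>i. x (Some i)) + 2 * x None * (\<Sum>i\<in>UNIV. x (Some i)) + th * (x None)\<^sup>2"
    proof (rule lim_aff)
      show "\<forall>s>th. 0 \<le> Qf Y (\<lambda>i. x (Some i)) + 2 * x None * (\<Sum>i\<in>UNIV. x (Some i)) + s * (x None)\<^sup>2"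
        using ps unfolding psd_bordered_iff[OF sym] by blast
    qed simp
  qed
  then have "th \<in> thS E" using sym d z nn unfolding thS_def by blast
  then show ?thesis unfolding th_def .
qed

lemma min_exists:
  fixes t :: real and E :: "'v::finite \<Rightarrow> 'v \<Rightarrow> bool"
  assumes t: "t \<ge> 1"
  shows "\<exists>Y\<in>feasP t. \<forall>Y'\<in>feasP t. frob (adj E) Y \<le> frob (adj E) Y'"
proof -
  define FP :: "(real^'v^'v) set" where "FP = {M. toF M \<in> feasP t}"
  have FPe: "FP = {M. (\<forall>i j. toF M i j = toF M j i) \<and> psd (bordered (toF M) t) \<and> (\<forall>i. toF M i i = 1) \<and> (\<forall>i j. 0 \<le> toF M i j)}"
    unfolding FP_def feasP_def by simp
  have cl: "closed FP" unfolding FPe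
    apply (intro closed_Collect_conj)
       apply (intro closed_Collect_all closed_Collect_eq continuous_intros)
      apply (rule closed_psd)
     apply (intro closed_Collect_all closed_Collect_eq continuous_intros)
    apply (intro closed_Collect_all closed_Collect_le continuous_intros)
    done
  have "FP \<subseteq> Kset"
  proof
    fix M assume "M \<in> FP"
    then have "fromF (toF M) \<in> Kset" unfolding FPe by (intro toF_Kset) auto
    moreover have "fromF (toF M) = M" by (simp add: fromF_def toF_def)
    ultimately show "M \<in> Kset" by simp
  qed
  then have cp: "compact FP" using cl compact_K
    by (meson bounded_subset compact_eq_bounded_closed)
  have ne: "FP \<noteq> {}" using J_feas[OF t] unfolding FP_def
    by (metis (no_types, lifting) empty_Collect_eq toF_fromF)
  have co: "continuous_on FP (\<lambda>M. frob (adj E) (toF M))"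
    unfolding frob_def by (rule continuous_on_subset[OF _ subset_UNIV]) (intro continuous_intros)
  obtain M where M: "M \<in> FP" "\<forall>M'\<in>FP. frob (adj E) (toF M) \<le> frob (adj E) (toF M')"
    using continuous_attains_inf[OF cp ne co] by blast
  show ?thesis
  proof (intro bexI ballI)
    show "toF M \<in> feasP t" using M unfolding FP_def by simp
    fix Y' :: "'v \<Rightarrow> 'v \<Rightarrow> real" assume "Y' \<in> feasP t"
    then have "fromF Y' \<in> FP" unfolding FP_def by simp
    then show "frob (adj E) (toF M) \<le> frob (adj E) Y'" using M(2) by fastforce
  qed
qed

lemma frob_nonneg: "\<forall>i j. 0 \<le> Y i j \<Longrightarrow> 0 \<le> frob (adj E) Y"
  unfolding frob_def adj_def by (intro sum_nonneg) auto

lemma frob_zero: "\<forall>i j. 0 \<le> Y i j \<Longrightarrow> frob (adj E) Y = 0 \<longleftrightarrow> (\<forall>i j. E i j \<longrightarrow> Y i j = 0)"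
  unfolding frob_def adj_def
  by (simp add: sum_nonneg_eq_0_iff sum_nonneg)

theorem mainTheorem5:
  fixes E :: "'v::finite \<Rightarrow> 'v \<Rightarrow> bool" and t :: real
  assumes "simple_graph E" and "t \<ge> 1"
  shows "Cval E t > 0 \<longleftrightarrow> t < theta_minus E"
proof -
  define V where "V = (\<lambda>Y. frob (adj E) Y / 2) ` feasP t"
  have Cv: "Cval E t = Inf V" unfolding Cval_def V_def ..
  have Vne: "V \<noteq> {}" unfolding V_def using J_feas[OF assms(2)] by blast
  have Vb: "bdd_below V"
  proof (rule bdd_belowI[of _ 0])
    fix v assume "v \<in> V"
    then obtain Y where "Y \<in> feasP t" "v = frob (adj E) Y / 2" unfolding V_def by blast
    then show "0 \<le> v" using frob_nonneg[of Y E] unfolding feasP_def by simp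
  qed
  have th: "theta_minus E = Inf (thS E)" by (rule theta_eq)
  show ?thesis
  proof
    assume pos: "Cval E t > 0"
    show "t < theta_minus E"
    proof (rule ccontr)
      assume "\<not> t < theta_minus E"
      then have "t \<in> thS E" using thS_mono[OF thS_inf_mem[OF assms(1)]] th by simp
      then obtain Y where Y: "\<forall>i j. Y i j = Y j i" "psd (bordered Y t)" "\<forall>i. Y i i = 1"
          "\<forall>i j. E i j \<longrightarrow> Y i j = 0" "\<forall>i j. 0 \<le> Y i j"
        unfolding thS_def by blast
      have "Y \<in> feasP t" using Y unfolding feasP_def by simp
      moreover have "frob (adj E) Y = 0" using frob_zero[OF Y(5), of E] Y(4) by simp
      ultimately have "0 \<in> V" unfolding V_def using imageI[of Y "feasP t" "\<lambda>Y. frob (adj E) Y / 2"] by simp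
      then have "Inf V \<le> 0" using Vb by (rule cInf_lower)
      then show False using pos Cv by simp
    qed
  next
    assume lt: "t < theta_minus E"
    have nt: "t \<notin> thS E"
    proof
      assume "t \<in> thS E"
      then have "Inf (thS E) \<le> t" by (rule cInf_lower[OF _ thS_bdd])
      then show False using lt th by simp
    qed
    obtain Y where Y: "Y \<in> feasP t" "\<forall>Y'\<in>feasP t. frob (adj E) Y \<le> frob (adj E) Y'"
      using min_exists[OF assms(2)] by blast
    have nn: "\<forall>i j. 0 \<le> Y i j" using Y(1) unfolding feasP_def by simp
    have "frob (adj E) Y \<noteq> 0"
    proof
      assume "frob (adj E) Y = 0"
      then have "\<forall>i j. E i j \<longrightarrow> Y i j = 0" using frob_zero[OF nn, of E] by simp
      moreover have "(\<forall>i j. Y i j = Y j i) \<and> psd (bordered Y t) \<and> (\<forall>i. Y i i = 1) \<and> (\<forall>i j. 0 \<le> Y i j)"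
        using Y(1) unfolding feasP_def by simp
      ultimately have "t \<in> thS E" unfolding thS_def by (intro CollectI exI[of _ Y]) simp
      then show False using nt by simp
    qed
    then have p: "frob (adj E) Y > 0" using frob_nonneg[OF nn, of E] by simp
    have "frob (adj E) Y / 2 \<le> Inf V" unfolding V_def
    proof (rule cInf_greatest)
      show "(\<lambda>Y. frob (adj E) Y / 2) ` feasP t \<noteq> {}" using Vne unfolding V_def .
      fix v assume "v \<in> (\<lambda>Y. frob (adj E) Y / 2) ` feasP t"
      then obtain Y' where "Y' \<in> feasP t" "v = frob (adj E) Y' / 2" by blast
      then show "frob (adj E) Y / 2 \<le> v" using Y(2) by simp
    qed
    then show "Cval E t > 0" using p Cv by simp
  qed
qed

end
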